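(* Let $U=\mathrm{Unif}(0,1)$ and let $P$ be a continuous distribution supported on $[0,1]$ with invertible CDF such that $\sup_{A\subseteq[0,1]}|P(A)-U(A)|\le\epsilon$. Let $X_{(k)}$ be the $k$-th smallest of $m$ i.i.d. draws from $P$, $1\le k\le m$. Then $\left|\mathbb{E}[X_{(k)}]-\frac{k}{m+1}\right|\le\epsilon$. *)

theory Defs
  imports "HOL-Probability.Probability"
begin

definition order_stat :: "nat \<Rightarrow> nat \<Rightarrow> (nat \<Rightarrow> real) \<Rightarrow> real" where
  "order_stat m k w = sort (map w [0..<m]) ! (k - 1)"

end

theory Submission
  imports Defs
begin

lemma sorted_nth_le_iff:
  fixes ys :: "real list"
  assumes "sorted ys" "j < length ys"
  shows "ys ! j \<le> t \<longleftrightarrow> j < length (filter (\<lambda>x. x \<le> t) ys)"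
proof
  assume h: "ys ! j \<le> t"
  have "{0..j} \<subseteq> {i. i < length ys \<and> ys ! i \<le> t}"
  proof
    fix i assume "i \<in> {0..j}"
    then have "ys ! i \<le> ys ! j" using assms by (auto intro: sorted_nth_mono)
    then show "i \<in> {i. i < length ys \<and> ys ! i \<le> t}" using h assms \<open>i \<in> {0..j}\<close> by auto
  qed
  from card_mono[OF _ this] have "Suc j \<le> card {i. i < length ys \<and> ys ! i \<le> t}" by auto
  then show "j < length (filter (\<lambda>x. x \<le> t) ys)" by (simp add: length_filter_conv_card)
next
  assume h: "j < length (filter (\<lambda>x. x \<le> t) ys)"
  show "ys ! j \<le> t"
  proof (rule ccontr)
    assume "\<not> ys ! j \<le> t"
    have "{i. i < length ys \<and> ys ! i \<le> t} \<subseteq> {..<j}"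
    proof
      fix i assume i: "i \<in> {i. i < length ys \<and> ys ! i \<le> t}"
      show "i \<in> {..<j}"
      proof (rule ccontr)
        assume "i \<notin> {..<j}"
        then have "ys ! j \<le> ys ! i" using assms i by (auto intro: sorted_nth_mono)
        then show False using i \<open>\<not> ys ! j \<le> t\<close> by auto
      qed
    qed
    from card_mono[OF _ this] have "card {i. i < length ys \<and> ys ! i \<le> t} \<le> j" by auto
    then show False using h by (simp add: length_filter_conv_card)
  qed
qed

lemma order_stat_gt_iff:
  assumes "1 \<le> k" "k \<le> m"
  shows "t < order_stat m k w \<longleftrightarrow> card {i. i < m \<and> w i \<le> t} < k"
proof -
  let ?ys = "sort (map w [0..<m])"
  have len: "length (filter (\<lambda>x. x \<le> t) ?ys) = card {i. i < m \<and> w i \<le> t}"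
  proof -
    have "length (filter (\<lambda>x. x \<le> t) ?ys) = length (filter (\<lambda>x. x \<le> t) (map w [0..<m]))"
      by (metis mset_filter mset_sort size_mset)
    also have "\<dots> = card {i. i < m \<and> w i \<le> t}"
      by (simp add: length_filter_conv_card, intro arg_cong[where f=card]) auto
    finally show ?thesis .
  qed
  have "order_stat m k w \<le> t \<longleftrightarrow> k - 1 < length (filter (\<lambda>x. x \<le> t) ?ys)"
    unfolding order_stat_def using assms by (intro sorted_nth_le_iff) auto
  then show ?thesis using len assms by linarith
qed

lemma card_le_sum_ind: fixes m :: nat and w :: "nat \<Rightarrow> real" shows "real (card {i. i < m \<and> w i \<le> a}) = (\<Sum>i<m. indicator {..a} (w i))"
proof -
  have "(\<Sum>i<m. indicator {..a} (w i) :: real) = (\<Sum>i\<in>{..<m}. if w i \<le> a then 1 else 0)"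
    by (intro sum.cong) (auto simp: indicator_def)
  also have "\<dots> = real (card ({..<m} \<inter> {i. w i \<le> a}))"
    by (subst sum.If_cases) auto
  also have "{..<m} \<inter> {i. w i \<le> a} = {i. i < m \<and> w i \<le> a}" by auto
  finally show ?thesis by simp
qed

lemma order_stat_measurable:
  fixes R :: "real measure"
  assumes "sets R = sets borel" "1 \<le> k" "k \<le> m"
  shows "order_stat m k \<in> borel_measurable (PiM {..<m} (\<lambda>_. R))"
proof (subst borel_measurable_iff_greater, intro allI)
  fix a
  have [measurable]: "(\<lambda>w. \<Sum>i<m. indicator {..a} (w i) :: real) \<in> borel_measurable (PiM {..<m} (\<lambda>_. R))"
    using assms(1) by measurable
  have "{w \<in> space (PiM {..<m} (\<lambda>_. R)). a < order_stat m k w} =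
        {w \<in> space (PiM {..<m} (\<lambda>_. R)). (\<Sum>i<m. indicator {..a} (w i) :: real) < real k}"
    using order_stat_gt_iff[OF assms(2,3)] card_le_sum_ind
    by (auto simp flip: card_le_sum_ind)
  also have "\<dots> \<in> sets (PiM {..<m} (\<lambda>_. R))" by measurable
  finally show "{w \<in> space (PiM {..<m} (\<lambda>_. R)). a < order_stat m k w} \<in> sets (PiM {..<m} (\<lambda>_. R))" .
qed

lemma prod_if_pow:
  fixes q r :: real and m :: nat
  assumes "S \<subseteq> {..<m}"
  shows "(\<Prod>i<m. if i \<in> S then q else r) = q ^ card S * r ^ (m - card S)"
proof -
  have "(\<Prod>i<m. if i \<in> S then q else r) = (\<Prod>i\<in>{..<m} \<inter> {i. i \<in> S}. q) * (\<Prod>i\<in>{..<m} \<inter> - {i. i \<in> S}. r)"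
    by (subst prod.If_cases) auto
  also have "{..<m} \<inter> {i. i \<in> S} = S" using assms by auto
  also have "{..<m} \<inter> - {i. i \<in> S} = {..<m} - S" by auto
  finally show ?thesis using assms by (simp add: card_Diff_subset finite_subset)
qed

lemma count_prob:
  fixes R :: "real measure"
  assumes R: "prob_space R" "sets R = sets borel" and k: "1 \<le> k" "k \<le> m"
  shows "measure (PiM {..<m} (\<lambda>_. R)) {w \<in> space (PiM {..<m} (\<lambda>_. R)). t < order_stat m k w} =
     (\<Sum>S \<in> {S. S \<subseteq> {..<m} \<and> card S < k}. measure R {..t} ^ card S * (1 - measure R {..t}) ^ (m - card S))"
proof -
  interpret R: prob_space R by fact
  interpret PR: product_prob_space "\<lambda>_. R" by unfold_locales
  let ?M = "PiM {..<m} (\<lambda>_. R)"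
  let ?Sk = "{S. S \<subseteq> {..<m} \<and> card S < k}"
  let ?E = "{w \<in> space ?M. t < order_stat m k w}"
  let ?q = "measure R {..t}"
  define f where "f (S::nat set) (i::nat) (x::real) = (if i \<in> S then indicator {..t} x else indicator {t<..} x :: real)" for S i x
  have fin: "finite ?Sk" by (rule finite_subset[of _ "Pow {..<m}"]) auto
  have ind: "indicator ?E w = (\<Sum>S\<in>?Sk. \<Prod>i<m. f S i (w i))" if w: "w \<in> space ?M" for w
  proof -
    let ?T = "{i. i<m \<and> w i \<le> t}"
    have "(\<Prod>i<m. f S i (w i)) = (if S = ?T then 1 else 0)" if Sk: "S \<in> ?Sk" for S
    proof (cases "S = ?T")
      case True then show ?thesis by (auto simp: f_def indicator_def intro!: prod.neutral)
    next
      case False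
      then obtain i where "i < m" "i \<in> S \<longleftrightarrow> \<not> w i \<le> t" using Sk by blast
      then have "f S i (w i) = 0" by (auto simp: f_def indicator_def)
      then show ?thesis using \<open>i < m\<close> False by (auto intro: prod_zero)
    qed
    then have "(\<Sum>S\<in>?Sk. \<Prod>i<m. f S i (w i)) = (\<Sum>S\<in>?Sk. if S = ?T then 1 else 0)"
      by (intro sum.cong) auto
    also have "\<dots> = (if ?T \<in> ?Sk then 1 else 0)" using fin by (simp add: sum.delta')
    also have "\<dots> = indicator ?E w" using w order_stat_gt_iff[OF k] by (auto simp: indicator_def)
    finally show ?thesis by simp
  qed
  have meas[measurable]: "order_stat m k \<in> borel_measurable ?M" by (rule order_stat_measurable[OF R(2) k])
  have sp: "space R = UNIV" using sets_eq_imp_space_eq[OF R(2)] by simp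
  have fS: "f S i = (if i \<in> S then indicator {..t} else indicator {t<..})" for S i
    by (simp add: f_def fun_eq_iff)
  have intf: "integrable R (f S i)" for S i
    by (cases "i \<in> S") (auto simp: fS R(2) less_top[symmetric] intro!: integrable_real_indicator)
  have intf2: "(\<integral>x. f S i x \<partial>R) = (if i \<in> S then ?q else 1 - ?q)" for S i
  proof (cases "i \<in> S")
    case True then show ?thesis by (simp add: fS R(2))
  next
    case False
    have "{t<..} = space R - {..t}" using sp by auto
    then have "measure R {t<..} = 1 - ?q" using R.prob_compl[of "{..t}"] R(2) by simp
    then show ?thesis using False by (simp add: fS R(2))
  qed
  have "measure ?M ?E = (\<integral>w. indicator ?E w \<partial>?M)" by simp
  also have "\<dots> = (\<integral>w. (\<Sum>S\<in>?Sk. \<Prod>i<m. f S i (w i)) \<partial>?M)"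
    by (rule Bochner_Integration.integral_cong[OF refl]) (rule ind)
  also have "\<dots> = (\<Sum>S\<in>?Sk. (\<integral>w. (\<Prod>i<m. f S i (w i)) \<partial>?M))"
    by (rule Bochner_Integration.integral_sum, rule PR.product_integrable_prod) (auto intro: intf)
  also have "\<dots> = (\<Sum>S\<in>?Sk. (\<Prod>i<m. (\<integral>x. f S i x \<partial>R)))"
    by (intro sum.cong refl PR.product_integral_prod intf) auto
  also have "\<dots> = (\<Sum>S\<in>?Sk. ?q ^ card S * (1 - ?q) ^ (m - card S))"
    by (intro sum.cong refl) (simp add: intf2 prod_if_pow)
  finally show ?thesis .
qed

lemma layer:
  fixes M :: "'a measure" and Y :: "'a \<Rightarrow> real" and \<phi> :: "real \<Rightarrow> real"
  assumes "prob_space M" and [measurable]: "Y \<in> borel_measurable M" "\<phi> \<in> borel_measurable borel"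
  shows "(\<integral>\<^sup>+ t. indicator {0..1} t * ennreal (measure M {w\<in>space M. \<phi> t < Y w}) \<partial>lborel) =
         (\<integral>\<^sup>+ w. ennreal (measure lborel {t \<in> {0..1}. \<phi> t < Y w}) \<partial>M)"
proof -
  interpret prob_space M by fact
  interpret pair_sigma_finite M lborel
    by (intro pair_sigma_finite.intro sigma_finite_measure_axioms) (rule lborel.sigma_finite_measure_axioms)
  define f where "f p = (if \<phi> (snd p) < Y (fst p) \<and> snd p \<in> {0..1} then 1 else 0 :: ennreal)" for p
  have fm: "f \<in> borel_measurable (M \<Otimes>\<^sub>M lborel)" unfolding f_def by measurable
  have i1: "(\<integral>\<^sup>+ w. f (w, t) \<partial>M) = indicator {0..1} t * ennreal (measure M {w\<in>space M. \<phi> t < Y w})" for t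
  proof -
    have "(\<integral>\<^sup>+ w. f (w, t) \<partial>M) = (\<integral>\<^sup>+ w. indicator {0..1} t * indicator {w\<in>space M. \<phi> t < Y w} w \<partial>M)"
      by (intro nn_integral_cong) (auto simp: f_def indicator_def)
    also have "\<dots> = indicator {0..1} t * emeasure M {w\<in>space M. \<phi> t < Y w}"
      by (subst nn_integral_cmult) auto
    finally show ?thesis by (simp add: emeasure_eq_measure)
  qed
  have i2: "(\<integral>\<^sup>+ t. f (w, t) \<partial>lborel) = ennreal (measure lborel {t \<in> {0..1}. \<phi> t < Y w})" if w: "w \<in> space M" for w
  proof -
    have S: "{t \<in> {0..1}. \<phi> t < Y w} \<in> sets lborel" by measurable
    have "(\<integral>\<^sup>+ t. f (w, t) \<partial>lborel) = (\<integral>\<^sup>+ t. indicator {t \<in> {0..1}. \<phi> t < Y w} t \<partial>lborel)"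
      by (intro nn_integral_cong) (auto simp: f_def indicator_def)
    also have "\<dots> = emeasure lborel {t \<in> {0..1}. \<phi> t < Y w}" using S by simp
    also have "\<dots> = ennreal (measure lborel {t \<in> {0..1}. \<phi> t < Y w})"
    proof (rule emeasure_eq_ennreal_measure)
      have "emeasure lborel {t \<in> {0..1}. \<phi> t < Y w} \<le> emeasure lborel {0..1::real}"
        by (intro emeasure_mono) auto
      then show "emeasure lborel {t \<in> {0..1}. \<phi> t < Y w} \<noteq> \<top>" by (auto simp: top_unique)
    qed
    finally show ?thesis .
  qed
  have "(\<integral>\<^sup>+ t. indicator {0..1} t * ennreal (measure M {w\<in>space M. \<phi> t < Y w}) \<partial>lborel) =
        (\<integral>\<^sup>+ t. (\<integral>\<^sup>+ w. f (w, t) \<partial>M) \<partial>lborel)" by (simp add: i1)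
  also have "\<dots> = (\<integral>\<^sup>+ w. (\<integral>\<^sup>+ t. f (w, t) \<partial>lborel) \<partial>M)" using Fubini'[of "\<lambda>w t. f (w, t)"] fm by simp
  also have "\<dots> = (\<integral>\<^sup>+ w. ennreal (measure lborel {t \<in> {0..1}. \<phi> t < Y w}) \<partial>M)"
    by (intro nn_integral_cong) (simp add: i2)
  finally show ?thesis .
qed

lemma beta_int:
  fixes a b :: nat
  shows "((\<lambda>t::real. t ^ a * (1 - t) ^ b) has_integral (fact a * fact b / fact (a + b + 1))) {0..1}"
proof -
  have "((\<lambda>t. t powr (real a + 1 - 1) * (1 - t) powr (real b + 1 - 1)) has_integral Beta (real a + 1) (real b + 1)) {0..1}"
    by (rule has_integral_Beta_real) auto
  then have "((\<lambda>t. t powr (real a + 1 - 1) * (1 - t) powr (real b + 1 - 1)) has_integral Beta (real a + 1) (real b + 1)) {0<..<1}"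
    by (simp add: has_integral_Icc_iff_Ioo)
  then have "((\<lambda>t::real. t ^ a * (1 - t) ^ b) has_integral Beta (real a + 1) (real b + 1)) {0<..<1}"
    by (rule has_integral_cong[THEN iffD1, rotated]) (auto simp: powr_realpow)
  then have *: "((\<lambda>t::real. t ^ a * (1 - t) ^ b) has_integral Beta (real a + 1) (real b + 1)) {0..1}"
    by (simp add: has_integral_Icc_iff_Ioo)
  have "Beta (real a + 1) (real b + 1) = fact a * fact b / fact (a + b + 1)"
  proof -
    have "Gamma (real a + 1) = fact a" using Gamma_fact[of a] by (simp add: add.commute)
    moreover have "Gamma (real b + 1) = fact b" using Gamma_fact[of b] by (simp add: add.commute)
    moreover have "Gamma (real a + 1 + (real b + 1)) = fact (a + b + 1)"
      using Gamma_fact[of "a + b + 1"] by (simp add: add_ac)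
    ultimately show ?thesis by (simp add: Beta_def)
  qed
  with * show ?thesis by simp
qed

lemma sum_subsets_card:
  fixes c :: "nat \<Rightarrow> real"
  assumes "k \<le> m"
  shows "(\<Sum>S \<in> {S. S \<subseteq> {..<m} \<and> card S < k}. c (card S)) = (\<Sum>a<k. real (m choose a) * c a)"
proof -
  let ?Sk = "{S. S \<subseteq> {..<m} \<and> card S < k}"
  have fin: "finite ?Sk" by (rule finite_subset[of _ "Pow {..<m}"]) auto
  have "(\<Sum>S \<in> ?Sk. c (card S)) = (\<Sum>a<k. \<Sum>S \<in> {S \<in> ?Sk. card S = a}. c (card S))"
    by (rule sum.group[symmetric]) (use fin in auto)
  also have "\<dots> = (\<Sum>a<k. real (m choose a) * c a)"
  proof (intro sum.cong refl)
    fix a assume "a \<in> {..<k}"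
    then have "{S \<in> ?Sk. card S = a} = {S. S \<subseteq> {..<m} \<and> card S = a}" by auto
    then have "(\<Sum>S \<in> {S \<in> ?Sk. card S = a}. c (card S)) = (\<Sum>S \<in> {S. S \<subseteq> {..<m} \<and> card S = a}. c a)"
      by (intro sum.cong) auto
    also have "\<dots> = real (m choose a) * c a" by (simp add: n_subsets)
    finally show "(\<Sum>S \<in> {S \<in> ?Sk. card S = a}. c (card S)) = real (m choose a) * c a" .
  qed
  finally show ?thesis .
qed

lemma g_integral:
  assumes "k \<le> m"
  shows "((\<lambda>t::real. \<Sum>S \<in> {S. S \<subseteq> {..<m} \<and> card S < k}. t ^ card S * (1 - t) ^ (m - card S))
     has_integral (real k / real (m + 1))) {0..1}"
proof -
  let ?Sk = "{S. S \<subseteq> {..<m} \<and> card S < k}"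
  have "((\<lambda>t::real. \<Sum>S \<in> ?Sk. t ^ card S * (1 - t) ^ (m - card S)) has_integral
      (\<Sum>S \<in> ?Sk. fact (card S) * fact (m - card S) / fact (card S + (m - card S) + 1))) {0..1}"
    by (intro has_integral_sum beta_int) (rule finite_subset[of _ "Pow {..<m}"], auto)
  also have "(\<Sum>S \<in> ?Sk. fact (card S) * fact (m - card S) / fact (card S + (m - card S) + 1) :: real)
      = (\<Sum>a<k. real (m choose a) * (fact a * fact (m - a) / fact (a + (m - a) + 1)))"
    by (rule sum_subsets_card[OF assms])
  also have "\<dots> = (\<Sum>a<k. 1 / real (m + 1))"
  proof (intro sum.cong refl)
    fix a assume "a \<in> {..<k}"
    then have a: "a \<le> m" using assms by auto
    then have "a + (m - a) + 1 = Suc m" by simp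
    then show "real (m choose a) * (fact a * fact (m - a) / fact (a + (m - a) + 1)) = 1 / real (m + 1)"
      using a by (simp add: binomial_fact field_simps add_nonneg_eq_0_iff)
  qed
  also have "\<dots> = real k / real (m + 1)" by simp
  finally show ?thesis .
qed

lemma os_bounds:
  assumes "\<forall>i<m. w i \<in> {0..1}" "1 \<le> k" "k \<le> m"
  shows "0 \<le> order_stat m k w \<and> order_stat m k w \<le> 1"
proof
  show "order_stat m k w \<le> 1"
  proof (rule ccontr)
    assume "\<not> order_stat m k w \<le> 1"
    then have "1 < order_stat m k w" by simp
    then have "card {i. i < m \<and> w i \<le> 1} < k" using order_stat_gt_iff[OF assms(2,3), of 1 w] by simp
    moreover have "{i. i < m \<and> w i \<le> 1} = {..<m}" using assms(1) by auto
    ultimately show False using assms by simp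
  qed
  show "0 \<le> order_stat m k w"
  proof (rule ccontr)
    assume h: "\<not> 0 \<le> order_stat m k w"
    have E: "{i. i < m \<and> w i \<le> order_stat m k w} = {}" using assms(1) h by force
    have "card {i. i < m \<and> w i \<le> order_stat m k w} < k" using assms(2) by (subst E) simp
    then have "order_stat m k w < order_stat m k w"
      using order_stat_gt_iff[OF assms(2,3), of "order_stat m k w" w] by blast
    then show False by simp
  qed
qed

lemma expect_layer:
  fixes R :: "real measure"
  assumes R: "prob_space R" "sets R = sets borel" "measure R {0..1} = 1" and k: "1 \<le> k" "k \<le> m"
  shows "AE w in PiM {..<m} (\<lambda>_. R). 0 \<le> order_stat m k w \<and> order_stat m k w \<le> 1"
    and "integrable (PiM {..<m} (\<lambda>_. R)) (order_stat m k)"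
    and "ennreal (\<integral>w. order_stat m k w \<partial>PiM {..<m} (\<lambda>_. R)) =
      (\<integral>\<^sup>+ t. indicator {0..1} t * ennreal (measure (PiM {..<m} (\<lambda>_. R))
            {w\<in>space (PiM {..<m} (\<lambda>_. R)). t < order_stat m k w}) \<partial>lborel)"
proof -
  interpret R: prob_space R by fact
  interpret PR: product_prob_space "\<lambda>_. R" by unfold_locales
  let ?M = "PiM {..<m} (\<lambda>_. R)"
  interpret PM: prob_space ?M by (rule prob_space_PiM) (simp add: R(1))
  have meas[measurable]: "order_stat m k \<in> borel_measurable ?M" by (rule order_stat_measurable[OF R(2) k])
  have AR: "AE x in R. x \<in> {0..1}" by (rule R.AE_prob_1) (simp add: R(3))
  have "AE w in ?M. w i \<in> {0..1}" if i: "i < m" for i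
  proof (rule AE_distrD[of "\<lambda>w. w i" ?M R])
    show "(\<lambda>w. w i) \<in> measurable ?M R" by (rule measurable_component_singleton) (use i in auto)
    show "AE x in distr ?M R (\<lambda>w. w i). x \<in> {0..1}"
    proof -
      have D: "distr ?M R (\<lambda>w. w i) = R" using distr_PiM_component[of "{..<m}" "\<lambda>_. R" i] i R(1) by simp
      show ?thesis unfolding D by (rule AR)
    qed
  qed
  then have "AE w in ?M. \<forall>i\<in>{..<m}. w i \<in> {0..1}" by (intro AE_finite_allI) auto
  then show AEb: "AE w in ?M. 0 \<le> order_stat m k w \<and> order_stat m k w \<le> 1"
    by eventually_elim (use os_bounds k in auto)
  show int: "integrable ?M (order_stat m k)"
  proof (rule Bochner_Integration.integrable_bound[where f="\<lambda>_. 1::real" and g="order_stat m k"])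
    show "integrable ?M (\<lambda>_. 1::real)" by (rule PM.integrable_const)
    show "order_stat m k \<in> borel_measurable ?M" by (rule meas)
    show "AE w in ?M. norm (order_stat m k w) \<le> norm (1::real)" using AEb by eventually_elim auto
  qed
  have "ennreal (\<integral>w. order_stat m k w \<partial>?M) = (\<integral>\<^sup>+ w. ennreal (order_stat m k w) \<partial>?M)"
    by (rule nn_integral_eq_integral[symmetric]) (use int AEb in auto)
  also have "\<dots> = (\<integral>\<^sup>+ w. ennreal (measure lborel {t \<in> {0..1}. t < order_stat m k w}) \<partial>?M)"
  proof (rule nn_integral_cong_AE)
    show "AE w in ?M. ennreal (order_stat m k w) = ennreal (measure lborel {t \<in> {0..1}. t < order_stat m k w})"
      using AEb
    proof eventually_elim
      case (elim w)
      then have "{t \<in> {0..1}. t < order_stat m k w} = {0..<order_stat m k w}" by auto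
      then show ?case using elim by simp
    qed
  qed
  also have "\<dots> = (\<integral>\<^sup>+ t. indicator {0..1} t * ennreal (measure ?M {w\<in>space ?M. t < order_stat m k w}) \<partial>lborel)"
    by (rule layer[symmetric]) (auto simp: PM.prob_space_axioms)
  finally show "ennreal (\<integral>w. order_stat m k w \<partial>?M) = (\<integral>\<^sup>+ t. indicator {0..1} t * ennreal (measure ?M {w\<in>space ?M. t < order_stat m k w}) \<partial>lborel)" .
qed

lemma fmeas_Icc: "{a..b::real} \<in> fmeasurable lborel"
  by (simp add: fmeasurable_def emeasure_lborel_Icc_eq)

lemma psi_fmeas:
  fixes F :: "real \<Rightarrow> real"
  assumes [measurable]: "F \<in> borel_measurable borel"
  shows "{t\<in>{0..1}. F t < v} \<in> fmeasurable lborel"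
  by (rule fmeasurableI2[OF fmeas_Icc[of 0 1]]) auto

lemma psi_mono:
  fixes F :: "real \<Rightarrow> real"
  assumes [measurable]: "F \<in> borel_measurable borel"
  shows "mono (\<lambda>v. measure lborel {t\<in>{0..1}. F t < v})"
proof (rule monoI)
  fix v v' :: real assume "v \<le> v'"
  then show "measure lborel {t\<in>{0..1}. F t < v} \<le> measure lborel {t\<in>{0..1}. F t < v'}"
    by (intro measure_mono_fmeasurable psi_fmeas) auto
qed

lemma psi_bounds:
  fixes F :: "real \<Rightarrow> real"
  assumes [measurable]: "F \<in> borel_measurable borel"
    and close: "\<And>t. t \<in> {0..1} \<Longrightarrow> \<bar>F t - t\<bar> \<le> \<epsilon>" and e: "0 \<le> \<epsilon>" and v: "0 \<le> v" "v \<le> 1"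
  shows "\<bar>measure lborel {t\<in>{0..1}. F t < v} - v\<bar> \<le> \<epsilon>"
proof -
  let ?A = "{t\<in>{0..1}. F t < v}"
  have "measure lborel ?A \<le> measure lborel {0..v+\<epsilon>}"
  proof (rule measure_mono_fmeasurable)
    show "?A \<subseteq> {0..v+\<epsilon>}"
    proof
      fix t assume t: "t \<in> ?A"
      then have "\<bar>F t - t\<bar> \<le> \<epsilon>" using close by auto
      then show "t \<in> {0..v+\<epsilon>}" using t by auto
    qed
  qed (auto intro: fmeas_Icc)
  then have up: "measure lborel ?A \<le> v + \<epsilon>" using v e by simp
  have low: "v - \<epsilon> \<le> measure lborel ?A"
  proof (cases "v - \<epsilon> \<le> 0")
    case True then show ?thesis using measure_nonneg[of lborel ?A] by linarith
  next
    case False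
    have "measure lborel {0..<v-\<epsilon>} \<le> measure lborel ?A"
    proof (rule measure_mono_fmeasurable)
      show "{0..<v-\<epsilon>} \<subseteq> ?A"
      proof
        fix t assume t: "t \<in> {0..<v-\<epsilon>}"
        then have t01: "t \<in> {0..1}" using v e by auto
        then have "\<bar>F t - t\<bar> \<le> \<epsilon>" using close by auto
        then show "t \<in> ?A" using t t01 by auto
      qed
    qed (simp, rule psi_fmeas[OF assms(1)])
    then show ?thesis using False by simp
  qed
  from up low show ?thesis by linarith
qed

theorem lemma12:
  fixes P :: "real measure" and \<epsilon> :: real and m k :: nat
  assumes "prob_space P"
    and "sets P = sets borel"
    and "measure P {0..1} = 1"
    and "\<And>x. measure P {x} = 0"
    and "bij_betw (cdf P) {0..1} {0..1}"
    and "\<And>A. A \<in> sets borel \<Longrightarrow> A \<subseteq> {0..1} \<Longrightarrow>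
           \<bar>measure P A - measure (uniform_measure lborel {0..1}) A\<bar> \<le> \<epsilon>"
    and "1 \<le> k" and "k \<le> m"
  shows "\<bar>(\<integral>w. order_stat m k w \<partial>(PiM {..<m} (\<lambda>_. P))) - real k / real (m + 1)\<bar> \<le> \<epsilon>"
proof -
  note k = assms(7,8)
  define U where "U = uniform_measure lborel {0..1::real}"
  define M where "M = PiM {..<m} (\<lambda>_. P)"
  define N where "N = PiM {..<m} (\<lambda>_. U)"
  define F where "F = cdf P"
  define g where "g q = (\<Sum>S \<in> {S. S \<subseteq> {..<m} \<and> card S < k}. q ^ card S * (1 - q) ^ (m - card S))" for q :: real
  define \<psi> where "\<psi> v = measure lborel {t\<in>{0..1}. F t < v}" for v
  let ?Y = "order_stat m k"
  interpret RP: prob_space P by fact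
  have U1: "prob_space U" unfolding U_def by (rule prob_space_uniform_measure) simp_all
  have U2: "sets U = sets borel" unfolding U_def by simp
  have U3: "measure U A = measure lborel ({0..1} \<inter> A)" if "A \<in> sets borel" for A
    unfolding U_def using that by (subst measure_uniform_measure) simp_all
  have U4: "measure U {0..1} = 1" by (simp add: U3)
  have Ucdf: "measure U {..t} = t" if "0 \<le> t" "t \<le> 1" for t
  proof -
    have "{0..1} \<inter> {..t} = {0..t}" using that by auto
    then show ?thesis using that by (simp add: U3)
  qed
  interpret PN: prob_space N unfolding N_def by (rule prob_space_PiM) (simp add: U1)
  interpret PM: prob_space M unfolding M_def by (rule prob_space_PiM) (simp add: assms(1))
  have e: "0 \<le> \<epsilon>" using assms(6)[of "{}"] by simp
  have spP: "space P = UNIV" using sets_eq_imp_space_eq[OF assms(2)] by simp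
  have F01: "0 \<le> F t \<and> F t \<le> 1" for t unfolding F_def cdf_def by simp
  have Fmono: "mono F" unfolding F_def cdf_def
    by (intro monoI RP.finite_measure_mono) (auto simp: assms(2))
  have Fm[measurable]: "F \<in> borel_measurable borel" by (rule borel_measurable_mono[OF Fmono])
  have Fclose: "\<bar>F t - t\<bar> \<le> \<epsilon>" if t: "t \<in> {0..1}" for t
  proof -
    have neg: "measure P {..<0} = 0"
    proof -
      have "measure P {..<0} \<le> measure P (space P - {0..1})"
        by (intro RP.finite_measure_mono) (auto simp: assms(2) spP)
      also have "\<dots> = 0" using RP.prob_compl[of "{0..1}"] assms(2,3) by simp
      finally show ?thesis using measure_nonneg[of P "{..<0}"] by linarith
    qed
    have "{..t} = {..<0} \<union> {0..t}" using t by auto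
    then have "F t = measure P {..<0} + measure P {0..t}" unfolding F_def cdf_def
      by (simp, subst RP.finite_measure_Union) (auto simp: assms(2))
    then have "F t = measure P {0..t}" using neg by simp
    moreover have "measure U {0..t} = t" using t by (simp add: U3)
    ultimately show ?thesis using assms(6)[of "{0..t}"] t by (simp add: U_def)
  qed
  have cntM: "measure M {w\<in>space M. t < ?Y w} = g (F t)" for t
    unfolding M_def g_def F_def cdf_def by (rule count_prob[OF assms(1,2) k])
  have cntN: "measure N {w\<in>space N. v < ?Y w} = g v" if "0 \<le> v" "v \<le> 1" for v
    unfolding N_def g_def using count_prob[OF U1 U2 k, of v] Ucdf[OF that] by simp
  have YmN[measurable]: "?Y \<in> borel_measurable N" unfolding N_def by (rule order_stat_measurable[OF U2 k])
  note elM = expect_layer[OF assms(1,2,3) k, folded M_def]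
  note elN = expect_layer[OF U1 U2 U4 k, folded N_def]
  have psim[measurable]: "\<psi> \<in> borel_measurable borel" unfolding \<psi>_def by (rule borel_measurable_mono[OF psi_mono[OF Fm]])
  have psi01: "0 \<le> \<psi> v \<and> \<psi> v \<le> 1" for v
  proof -
    have "\<psi> v \<le> measure lborel {0..1::real}" unfolding \<psi>_def
      by (rule measure_mono_fmeasurable) (auto intro: fmeas_Icc)
    then show ?thesis by (simp add: \<psi>_def)
  qed
  have intpsi: "integrable N (\<lambda>w. \<psi> (?Y w))"
  proof (rule Bochner_Integration.integrable_bound[where f="\<lambda>_. 1::real" and g="\<lambda>w. \<psi> (?Y w)"])
    show "integrable N (\<lambda>_. 1::real)" by (rule PN.integrable_const)
    show "(\<lambda>w. \<psi> (?Y w)) \<in> borel_measurable N" by measurable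
    show "AE w in N. norm (\<psi> (?Y w)) \<le> norm (1::real)" using psi01 by (auto intro!: AE_I2)
  qed
  have "ennreal (\<integral>w. ?Y w \<partial>M) = (\<integral>\<^sup>+ t. indicator {0..1} t * ennreal (measure M {w\<in>space M. t < ?Y w}) \<partial>lborel)"
    by (rule elM(3))
  also have "\<dots> = (\<integral>\<^sup>+ t. indicator {0..1} t * ennreal (measure N {w\<in>space N. F t < ?Y w}) \<partial>lborel)"
    by (intro nn_integral_cong) (simp add: cntM cntN F01)
  also have "\<dots> = (\<integral>\<^sup>+ w. ennreal (\<psi> (?Y w)) \<partial>N)"
    unfolding \<psi>_def by (rule layer[OF PN.prob_space_axioms YmN Fm])
  also have "\<dots> = ennreal (\<integral>w. \<psi> (?Y w) \<partial>N)"
    by (rule nn_integral_eq_integral[OF intpsi]) (simp add: psi01)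
  finally have "ennreal (\<integral>w. ?Y w \<partial>M) = ennreal (\<integral>w. \<psi> (?Y w) \<partial>N)" .
  moreover have "0 \<le> (\<integral>w. ?Y w \<partial>M)"
    by (rule integral_nonneg_AE) (use elM(1) in auto)
  moreover have "0 \<le> (\<integral>w. \<psi> (?Y w) \<partial>N)" by (rule integral_nonneg_AE) (simp add: psi01)
  ultimately have EM: "(\<integral>w. ?Y w \<partial>M) = (\<integral>w. \<psi> (?Y w) \<partial>N)" by simp
  have "ennreal (\<integral>w. ?Y w \<partial>N) = (\<integral>\<^sup>+ t. indicator {0..1} t * ennreal (measure N {w\<in>space N. t < ?Y w}) \<partial>lborel)"
    by (rule elN(3))
  also have "\<dots> = (\<integral>\<^sup>+ t. ennreal (indicator {0..1} t * g t) \<partial>lborel)"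
    by (intro nn_integral_cong) (auto simp: cntN indicator_def)
  also have "\<dots> = ennreal (real k / real (m + 1))"
  proof (rule nn_integral_has_integral_lebesgue)
    show "((\<lambda>t. g t) has_integral real k / real (m + 1)) {0..1}"
      unfolding g_def by (rule g_integral[OF k(2)])
    show "0 \<le> g x" if "x \<in> {0..1}" for x
      unfolding g_def using that by (intro sum_nonneg mult_nonneg_nonneg) auto
  qed
  finally have "ennreal (\<integral>w. ?Y w \<partial>N) = ennreal (real k / real (m + 1))" .
  moreover have "0 \<le> (\<integral>w. ?Y w \<partial>N)"
    by (rule integral_nonneg_AE) (use elN(1) in auto)
  ultimately have EN: "(\<integral>w. ?Y w \<partial>N) = real k / real (m + 1)" by simp
  have "\<bar>(\<integral>w. \<psi> (?Y w) \<partial>N) - (\<integral>w. ?Y w \<partial>N)\<bar> = \<bar>\<integral>w. \<psi> (?Y w) - ?Y w \<partial>N\<bar>"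
    by (simp add: Bochner_Integration.integral_diff[OF intpsi elN(2)])
  also have "\<dots> \<le> (\<integral>w. \<bar>\<psi> (?Y w) - ?Y w\<bar> \<partial>N)" by (rule integral_abs_bound)
  also have "\<dots> \<le> (\<integral>w. \<epsilon> \<partial>N)"
  proof (rule integral_mono_AE)
    show "integrable N (\<lambda>w. \<bar>\<psi> (?Y w) - ?Y w\<bar>)" by (intro integrable_abs Bochner_Integration.integrable_diff intpsi elN(2))
    show "integrable N (\<lambda>w. \<epsilon>)" by (rule PN.integrable_const)
    show "AE w in N. \<bar>\<psi> (?Y w) - ?Y w\<bar> \<le> \<epsilon>"
      using elN(1) by eventually_elim (unfold \<psi>_def, rule psi_bounds[OF Fm Fclose e], auto)
  qed
  also have "\<dots> = \<epsilon>" by (simp add: PN.prob_space)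
  finally show ?thesis using EM EN by (simp add: M_def)
qed

end
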